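(* Let $X$ be a compact Hausdorff space. Then $\mathscr{C}_{\mathrm{a.e.}}(X)$ and all its subrings are strongly localizable archimedean partially ordered commutative rings.
   Context: $\mathscr{C}_{\mathrm{a.e.}}(X)$: consider continuous real-valued functions $f$ defined on dense open subsets $\operatorname{dom}f$ of $X$; define $f+g$, $fg$ pointwise on $\operatorname{dom}f\cap\operatorname{dom}g$; $f\approx g$ iff $f|_A=g|_A$ for some dense open $A\subseteq\operatorname{dom}f\cap\operatorname{dom}g$. $\mathscr{C}_{\mathrm{a.e.}}(X)$ is the quotient commutative ring, ordered by $[f]\le[g]$ iff $f|_A\le g|_A$ pointwise for some dense open $A\subseteq\operatorname{dom}f\cap\operatorname{dom}g$. Subrings contain $1$ and carry the induced order. A partially ordered commutative ring is a commutative ring with partial order $\le$, $r\le s\Rightarrow r+t\le s+t$, positive cone $R^+$ closed under multiplication and containing all squares. $\mathbb{N}=\{1,2,\dots\}$. Archimedean: $kg+h\in R^+$ for all $k\in\mathbb{N}$ implies $g\in R^+$. $\mathrm{Loc}(R)$: the $s\in1+R^+$ with $rs\in R^+\Rightarrow r\in R^+$ for all $r$. Strongly localizable: $r^2\in R^+$ for all $r$ and $\mathrm{Loc}(R)=1+R^+$. *)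

theory Defs
  imports "HOL-Analysis.Analysis" "HOL-Algebra.Algebra"
begin

record 'a ordered_ring = "'a ring" + ole :: "'a \<Rightarrow> 'a \<Rightarrow> bool"

definition pos_cone :: "('a, 'b) ordered_ring_scheme \<Rightarrow> 'a set" where
  "pos_cone R = {r \<in> carrier R. ole R (\<zero>\<^bsub>R\<^esub>) r}"

definition po_cring :: "('a, 'b) ordered_ring_scheme \<Rightarrow> bool" where
  "po_cring R \<longleftrightarrow> cring R
    \<and> (\<forall>r\<in>carrier R. ole R r r)
    \<and> (\<forall>r\<in>carrier R. \<forall>s\<in>carrier R. ole R r s \<and> ole R s r \<longrightarrow> r = s)
    \<and> (\<forall>r\<in>carrier R. \<forall>s\<in>carrier R. \<forall>t\<in>carrier R. ole R r s \<and> ole R s t \<longrightarrow> ole R r t)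
    \<and> (\<forall>r\<in>carrier R. \<forall>s\<in>carrier R. \<forall>t\<in>carrier R.
          ole R r s \<longrightarrow> ole R (add R r t) (add R s t))
    \<and> (\<forall>r\<in>pos_cone R. \<forall>s\<in>pos_cone R. mult R r s \<in> pos_cone R)
    \<and> (\<forall>r\<in>carrier R. mult R r r \<in> pos_cone R)"

definition archimedean_po :: "('a, 'b) ordered_ring_scheme \<Rightarrow> bool" where
  "archimedean_po R \<longleftrightarrow>
    (\<forall>g\<in>carrier R. \<forall>h\<in>carrier R.
       (\<forall>k::nat. k \<ge> 1 \<longrightarrow> add R (add_pow R k g) h \<in> pos_cone R) \<longrightarrow> g \<in> pos_cone R)"

definition Loc :: "('a, 'b) ordered_ring_scheme \<Rightarrow> 'a set" where
  "Loc R = {s. (\<exists>p\<in>pos_cone R. s = add R (\<one>\<^bsub>R\<^esub>) p)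
              \<and> (\<forall>r\<in>carrier R. mult R r s \<in> pos_cone R \<longrightarrow> r \<in> pos_cone R)}"

definition strongly_localizable :: "('a, 'b) ordered_ring_scheme \<Rightarrow> bool" where
  "strongly_localizable R \<longleftrightarrow>
    (\<forall>r\<in>carrier R. mult R r r \<in> pos_cone R)
    \<and> Loc R = (\<lambda>p. add R (\<one>\<^bsub>R\<^esub>) p) ` pos_cone R"

text \<open>A representative is a pair (A, f): A a dense open subset of T and f continuous on A
  (values of f outside A are irrelevant).\<close>

type_synonym 'a cae_rep = "'a set \<times> ('a \<Rightarrow> real)"

definition dense_open :: "'a topology \<Rightarrow> 'a set \<Rightarrow> bool" where
  "dense_open T A \<longleftrightarrow> openin T A \<and> T closure_of A = topspace T"

definition cae_valid :: "'a topology \<Rightarrow> 'a cae_rep \<Rightarrow> bool" where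
  "cae_valid T p \<longleftrightarrow> dense_open T (fst p)
     \<and> continuous_map (subtopology T (fst p)) euclideanreal (snd p)"

definition cae_eq :: "'a topology \<Rightarrow> 'a cae_rep \<Rightarrow> 'a cae_rep \<Rightarrow> bool" where
  "cae_eq T p q \<longleftrightarrow> (\<exists>D. dense_open T D \<and> D \<subseteq> fst p \<inter> fst q
                        \<and> (\<forall>x\<in>D. snd p x = snd q x))"

definition cae_class :: "'a topology \<Rightarrow> 'a cae_rep \<Rightarrow> 'a cae_rep set" where
  "cae_class T p = {q. cae_valid T q \<and> cae_eq T p q}"

definition rep_add :: "'a cae_rep \<Rightarrow> 'a cae_rep \<Rightarrow> 'a cae_rep" where
  "rep_add p q = (fst p \<inter> fst q, \<lambda>x. snd p x + snd q x)"

definition rep_mult :: "'a cae_rep \<Rightarrow> 'a cae_rep \<Rightarrow> 'a cae_rep" where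
  "rep_mult p q = (fst p \<inter> fst q, \<lambda>x. snd p x * snd q x)"

definition Cae :: "'a topology \<Rightarrow> ('a cae_rep set) ordered_ring" where
  "Cae T = ordered_ring.make
     {cae_class T p | p. cae_valid T p}
     (\<lambda>C E. \<Union>{cae_class T (rep_mult p q) | p q. p \<in> C \<and> q \<in> E})
     (cae_class T (topspace T, \<lambda>_. 1))
     (cae_class T (topspace T, \<lambda>_. 0))
     (\<lambda>C E. \<Union>{cae_class T (rep_add p q) | p q. p \<in> C \<and> q \<in> E})
     (\<lambda>C E. \<exists>p\<in>C. \<exists>q\<in>E. \<exists>D. dense_open T D \<and> D \<subseteq> fst p \<inter> fst q
                      \<and> (\<forall>x\<in>D. snd p x \<le> snd q x))"

end

theory Submission
  imports Defs
begin

lemma dense_open_Int: "dense_open T A \<Longrightarrow> dense_open T B \<Longrightarrow> dense_open T (A \<inter> B)"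
  unfolding dense_open_def dense_intersects_open
  by (metis inf_assoc inf_commute openin_Int)

lemma dense_open_top: "dense_open T (topspace T)"
  by (simp add: dense_open_def)

lemma dense_open_sub: "dense_open T A \<Longrightarrow> A \<subseteq> topspace T"
  by (simp add: dense_open_def openin_subset)

lemma le_extend:
  assumes A: "dense_open T A" and B: "dense_open T B"
    and f: "continuous_map (subtopology T A) euclideanreal f"
    and g: "continuous_map (subtopology T B) euclideanreal g"
    and D: "dense_open T D" "D \<subseteq> A \<inter> B" and le: "\<forall>x\<in>D. f x \<le> g x"
    and x: "x \<in> A \<inter> B"
  shows "f x \<le> g x"
proof (rule ccontr)
  assume nx: "\<not> f x \<le> g x"
  have fA: "continuous_map (subtopology T (A \<inter> B)) euclideanreal f"
    using f continuous_map_from_subtopology_mono by blast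
  have gB: "continuous_map (subtopology T (A \<inter> B)) euclideanreal g"
    using g continuous_map_from_subtopology_mono by blast
  have c: "continuous_map (subtopology T (A \<inter> B)) euclideanreal (\<lambda>y. f y - g y)"
    using fA gB by (intro continuous_map_diff)
  have AB: "openin T (A \<inter> B)" using A B unfolding dense_open_def by auto
  have "openin (subtopology T (A \<inter> B)) {y \<in> topspace (subtopology T (A \<inter> B)). f y - g y \<in> {0<..}}"
    by (rule openin_continuous_map_preimage[OF c]) simp
  then have U: "openin T {y \<in> topspace (subtopology T (A \<inter> B)). f y - g y \<in> {0<..}}"
    using AB openin_trans_full by blast
  have "x \<in> {y \<in> topspace (subtopology T (A \<inter> B)). f y - g y \<in> {0<..}}"
    using x nx AB openin_subset by fastforce
  then have "D \<inter> {y \<in> topspace (subtopology T (A \<inter> B)). f y - g y \<in> {0<..}} \<noteq> {}"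
    using D(1) U unfolding dense_open_def dense_intersects_open by blast
  then show False using le by auto
qed

lemma valid_sub: "cae_valid T p \<Longrightarrow> fst p \<subseteq> topspace T"
  by (simp add: cae_valid_def dense_open_sub)

lemma valid_add: "cae_valid T p \<Longrightarrow> cae_valid T q \<Longrightarrow> cae_valid T (rep_add p q)"
  unfolding cae_valid_def rep_add_def
  by (auto intro!: dense_open_Int continuous_map_add elim: continuous_map_from_subtopology_mono)

lemma valid_mult: "cae_valid T p \<Longrightarrow> cae_valid T q \<Longrightarrow> cae_valid T (rep_mult p q)"
  unfolding cae_valid_def rep_mult_def
  by (auto intro!: dense_open_Int continuous_map_real_mult elim: continuous_map_from_subtopology_mono)

lemma valid_const: "cae_valid T (topspace T, \<lambda>_. c)"
  by (simp add: cae_valid_def dense_open_top)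

lemma valid_neg: "cae_valid T p \<Longrightarrow> cae_valid T (fst p, \<lambda>x. - snd p x)"
  unfolding cae_valid_def by (auto intro!: continuous_map_minus)

lemma valid_scale: "cae_valid T p \<Longrightarrow> cae_valid T (fst p, \<lambda>x. c * snd p x)"
  unfolding cae_valid_def by (auto intro!: continuous_map_real_mult)

definition le_ae :: "'a topology \<Rightarrow> 'a cae_rep \<Rightarrow> 'a cae_rep \<Rightarrow> bool" where
  "le_ae T p q \<longleftrightarrow> (\<exists>D. dense_open T D \<and> D \<subseteq> fst p \<inter> fst q \<and> (\<forall>x\<in>D. snd p x \<le> snd q x))"

lemma le_ae_iff:
  assumes "cae_valid T p" "cae_valid T q"
  shows "le_ae T p q \<longleftrightarrow> (\<forall>x\<in>fst p \<inter> fst q. snd p x \<le> snd q x)"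
proof
  assume "le_ae T p q"
  then obtain D where D: "dense_open T D" "D \<subseteq> fst p \<inter> fst q" "\<forall>x\<in>D. snd p x \<le> snd q x"
    unfolding le_ae_def by blast
  show "\<forall>x\<in>fst p \<inter> fst q. snd p x \<le> snd q x"
    using le_extend[OF _ _ _ _ D] assms unfolding cae_valid_def by blast
next
  assume "\<forall>x\<in>fst p \<inter> fst q. snd p x \<le> snd q x"
  then show "le_ae T p q" unfolding le_ae_def
    using assms by (intro exI[of _ "fst p \<inter> fst q"]) (auto simp: cae_valid_def dense_open_Int)
qed

lemma cae_eq_iff:
  assumes "cae_valid T p" "cae_valid T q"
  shows "cae_eq T p q \<longleftrightarrow> (\<forall>x\<in>fst p \<inter> fst q. snd p x = snd q x)"
proof
  assume "cae_eq T p q"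
  then have "le_ae T p q" "le_ae T q p" unfolding cae_eq_def le_ae_def by force+
  then show "\<forall>x\<in>fst p \<inter> fst q. snd p x = snd q x"
    using le_ae_iff[OF assms] le_ae_iff[OF assms(2,1)] by (meson IntD1 IntD2 IntI order_antisym)
next
  assume "\<forall>x\<in>fst p \<inter> fst q. snd p x = snd q x"
  then show "cae_eq T p q" unfolding cae_eq_def
    using assms by (intro exI[of _ "fst p \<inter> fst q"]) (auto simp: cae_valid_def dense_open_Int)
qed

lemma cae_eq_trans:
  assumes "cae_valid T p" "cae_valid T q" "cae_valid T r" "cae_eq T p q" "cae_eq T q r"
  shows "cae_eq T p r"
proof -
  have "\<forall>x\<in>fst p \<inter> fst q. snd p x = snd q x" "\<forall>x\<in>fst q \<inter> fst r. snd q x = snd r x"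
    using assms cae_eq_iff by blast+
  then show ?thesis unfolding cae_eq_def
    using assms by (intro exI[of _ "fst p \<inter> fst q \<inter> fst r"]) (auto simp: cae_valid_def dense_open_Int)
qed

lemma cae_eq_sym: "cae_eq T p q \<Longrightarrow> cae_eq T q p"
  unfolding cae_eq_def by auto

lemma cae_eq_refl: "cae_valid T p \<Longrightarrow> cae_eq T p p"
  using cae_eq_iff by blast

lemma class_eq_iff:
  assumes "cae_valid T p" "cae_valid T q"
  shows "cae_class T p = cae_class T q \<longleftrightarrow> cae_eq T p q"
proof
  assume "cae_class T p = cae_class T q"
  then have "q \<in> cae_class T p" using assms cae_eq_refl unfolding cae_class_def by blast
  then show "cae_eq T p q" unfolding cae_class_def by auto
next
  assume e: "cae_eq T p q"
  show "cae_class T p = cae_class T q" unfolding cae_class_def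
    using cae_eq_trans[OF assms(2,1) _ cae_eq_sym[OF e]] cae_eq_trans[OF assms(1,2) _ e] by blast
qed

lemma class_eqI:
  assumes "cae_valid T p" "cae_valid T q" "\<forall>x\<in>fst p \<inter> fst q. snd p x = snd q x"
  shows "cae_class T p = cae_class T q"
  using assms class_eq_iff cae_eq_iff by blast

lemma class_eqI2:
  assumes "cae_valid T p" "cae_valid T q" "\<And>x. x \<in> fst p \<Longrightarrow> x \<in> fst q \<Longrightarrow> snd p x = snd q x"
  shows "cae_class T p = cae_class T q"
  using assms class_eqI by blast

lemma mem_class: "q \<in> cae_class T p \<longleftrightarrow> cae_valid T q \<and> cae_eq T p q"
  unfolding cae_class_def by auto

lemma self_class: "cae_valid T p \<Longrightarrow> p \<in> cae_class T p"
  by (simp add: mem_class cae_eq_refl)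

lemma carrier_Cae: "carrier (Cae T) = {cae_class T p | p. cae_valid T p}"
  by (simp add: Cae_def ordered_ring.defs)

lemma add_Cae: "add (Cae T) C E = \<Union>{cae_class T (rep_add p q) | p q. p \<in> C \<and> q \<in> E}"
  by (simp add: Cae_def ordered_ring.defs)

lemma mult_Cae: "mult (Cae T) C E = \<Union>{cae_class T (rep_mult p q) | p q. p \<in> C \<and> q \<in> E}"
  by (simp add: Cae_def ordered_ring.defs)

lemma zero_Cae: "\<zero>\<^bsub>Cae T\<^esub> = cae_class T (topspace T, \<lambda>_. 0)"
  by (simp add: Cae_def ordered_ring.defs)

lemma one_Cae: "\<one>\<^bsub>Cae T\<^esub> = cae_class T (topspace T, \<lambda>_. 1)"
  by (simp add: Cae_def ordered_ring.defs)

lemma ole_Cae: "ole (Cae T) C E = (\<exists>p\<in>C. \<exists>q\<in>E. le_ae T p q)"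
  by (simp add: Cae_def ordered_ring.defs le_ae_def)

lemma add_class:
  assumes p: "cae_valid T p" and q: "cae_valid T q"
  shows "add (Cae T) (cae_class T p) (cae_class T q) = cae_class T (rep_add p q)"
proof -
  have "cae_class T (rep_add p' q') = cae_class T (rep_add p q)"
    if "p' \<in> cae_class T p" "q' \<in> cae_class T q" for p' q'
  proof -
    have v: "cae_valid T p'" "cae_valid T q'" and e: "cae_eq T p p'" "cae_eq T q q'"
      using that by (auto simp: mem_class)
    have "\<forall>x\<in>fst p \<inter> fst p'. snd p x = snd p' x" "\<forall>x\<in>fst q \<inter> fst q'. snd q x = snd q' x"
      using e cae_eq_iff p q v by blast+
    then show ?thesis
      by (intro class_eqI valid_add v p q) (auto simp: rep_add_def)
  qed
  moreover have "\<exists>p' q'. p' \<in> cae_class T p \<and> q' \<in> cae_class T q"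
    using p q self_class by blast
  ultimately show ?thesis unfolding add_Cae by blast
qed

lemma mult_class:
  assumes p: "cae_valid T p" and q: "cae_valid T q"
  shows "mult (Cae T) (cae_class T p) (cae_class T q) = cae_class T (rep_mult p q)"
proof -
  have "cae_class T (rep_mult p' q') = cae_class T (rep_mult p q)"
    if "p' \<in> cae_class T p" "q' \<in> cae_class T q" for p' q'
  proof -
    have v: "cae_valid T p'" "cae_valid T q'" and e: "cae_eq T p p'" "cae_eq T q q'"
      using that by (auto simp: mem_class)
    have "\<forall>x\<in>fst p \<inter> fst p'. snd p x = snd p' x" "\<forall>x\<in>fst q \<inter> fst q'. snd q x = snd q' x"
      using e cae_eq_iff p q v by blast+
    then show ?thesis
      by (intro class_eqI valid_mult v p q) (auto simp: rep_mult_def)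
  qed
  moreover have "\<exists>p' q'. p' \<in> cae_class T p \<and> q' \<in> cae_class T q"
    using p q self_class by blast
  ultimately show ?thesis unfolding mult_Cae by blast
qed

lemma ole_class:
  assumes p: "cae_valid T p" and q: "cae_valid T q"
  shows "ole (Cae T) (cae_class T p) (cae_class T q) \<longleftrightarrow> (\<forall>x\<in>fst p \<inter> fst q. snd p x \<le> snd q x)"
proof
  assume "ole (Cae T) (cae_class T p) (cae_class T q)"
  then obtain p' q' where pq: "p' \<in> cae_class T p" "q' \<in> cae_class T q" "le_ae T p' q'"
    unfolding ole_Cae by blast
  have v: "cae_valid T p'" "cae_valid T q'" and e: "cae_eq T p p'" "cae_eq T q q'"
    using pq by (auto simp: mem_class)
  have ee: "\<forall>x\<in>fst p \<inter> fst p'. snd p x = snd p' x" "\<forall>x\<in>fst q \<inter> fst q'. snd q x = snd q' x"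
    using e cae_eq_iff p q v by blast+
  have l: "\<forall>x\<in>fst p' \<inter> fst q'. snd p' x \<le> snd q' x" using pq(3) le_ae_iff v by blast
  have "le_ae T p q" unfolding le_ae_def
    using p q v ee l
    by (intro exI[of _ "fst p \<inter> fst q \<inter> fst p' \<inter> fst q'"]) (auto simp: cae_valid_def dense_open_Int)
  then show "\<forall>x\<in>fst p \<inter> fst q. snd p x \<le> snd q x" using le_ae_iff p q by blast
next
  assume "\<forall>x\<in>fst p \<inter> fst q. snd p x \<le> snd q x"
  then show "ole (Cae T) (cae_class T p) (cae_class T q)"
    unfolding ole_Cae using le_ae_iff p q self_class by blast
qed

lemma carrier_Cae_E:
  assumes "C \<in> carrier (Cae T)"
  obtains p where "cae_valid T p" "C = cae_class T p"
  using assms unfolding carrier_Cae by blast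

lemma class_in_carrier: "cae_valid T p \<Longrightarrow> cae_class T p \<in> carrier (Cae T)"
  unfolding carrier_Cae by blast

lemmas cae_simps = add_class mult_class valid_add valid_mult valid_const zero_Cae one_Cae

lemma cring_Cae: "cring (Cae T)"
proof (rule cringI)
  show "abelian_group (Cae T)"
  proof (rule abelian_groupI)
    fix x y assume "x \<in> carrier (Cae T)" "y \<in> carrier (Cae T)"
    then show "x \<oplus>\<^bsub>Cae T\<^esub> y \<in> carrier (Cae T)"
      by (elim carrier_Cae_E) (simp add: cae_simps class_in_carrier)
  next
    show "\<zero>\<^bsub>Cae T\<^esub> \<in> carrier (Cae T)" by (simp add: cae_simps class_in_carrier)
  next
    fix x y z assume "x \<in> carrier (Cae T)" "y \<in> carrier (Cae T)" "z \<in> carrier (Cae T)"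
    then show "x \<oplus>\<^bsub>Cae T\<^esub> y \<oplus>\<^bsub>Cae T\<^esub> z = x \<oplus>\<^bsub>Cae T\<^esub> (y \<oplus>\<^bsub>Cae T\<^esub> z)"
      by (elim carrier_Cae_E) (simp add: cae_simps, rule class_eqI2, (simp add: cae_simps)+, auto simp: cae_simps rep_add_def)
  next
    fix x y assume "x \<in> carrier (Cae T)" "y \<in> carrier (Cae T)"
    then show "x \<oplus>\<^bsub>Cae T\<^esub> y = y \<oplus>\<^bsub>Cae T\<^esub> x"
      by (elim carrier_Cae_E) (simp add: cae_simps, rule class_eqI2, (simp add: cae_simps)+, auto simp: cae_simps rep_add_def)
  next
    fix x assume "x \<in> carrier (Cae T)"
    then show "\<zero>\<^bsub>Cae T\<^esub> \<oplus>\<^bsub>Cae T\<^esub> x = x"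
      by (elim carrier_Cae_E) (simp add: cae_simps, rule class_eqI2, (simp add: cae_simps)+, auto simp: cae_simps rep_add_def)
  next
    fix x assume "x \<in> carrier (Cae T)"
    then obtain p where p: "cae_valid T p" "x = cae_class T p" by (elim carrier_Cae_E)
    have "cae_class T (fst p, \<lambda>x. - snd p x) \<oplus>\<^bsub>Cae T\<^esub> x = \<zero>\<^bsub>Cae T\<^esub>"
      unfolding p(2) add_class[OF valid_neg[OF p(1)] p(1)] zero_Cae
      by (rule class_eqI2, rule valid_add[OF valid_neg[OF p(1)] p(1)], rule valid_const) (auto simp: valid_add valid_neg p(1) valid_const rep_add_def dest: valid_sub[OF p(1), THEN subsetD])
    then show "\<exists>y\<in>carrier (Cae T). y \<oplus>\<^bsub>Cae T\<^esub> x = \<zero>\<^bsub>Cae T\<^esub>"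
      using class_in_carrier[OF valid_neg[OF p(1)]] by blast
  qed
next
  show "comm_monoid (Cae T)"
  proof (rule comm_monoidI)
    fix x y assume "x \<in> carrier (Cae T)" "y \<in> carrier (Cae T)"
    then show "x \<otimes>\<^bsub>Cae T\<^esub> y \<in> carrier (Cae T)"
      by (elim carrier_Cae_E) (simp add: cae_simps class_in_carrier)
  next
    show "\<one>\<^bsub>Cae T\<^esub> \<in> carrier (Cae T)" by (simp add: cae_simps class_in_carrier)
  next
    fix x y z assume "x \<in> carrier (Cae T)" "y \<in> carrier (Cae T)" "z \<in> carrier (Cae T)"
    then show "x \<otimes>\<^bsub>Cae T\<^esub> y \<otimes>\<^bsub>Cae T\<^esub> z = x \<otimes>\<^bsub>Cae T\<^esub> (y \<otimes>\<^bsub>Cae T\<^esub> z)"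
      by (elim carrier_Cae_E) (simp add: cae_simps, rule class_eqI2, (simp add: cae_simps)+, auto simp: cae_simps rep_mult_def)
  next
    fix x assume "x \<in> carrier (Cae T)"
    then show "\<one>\<^bsub>Cae T\<^esub> \<otimes>\<^bsub>Cae T\<^esub> x = x"
      by (elim carrier_Cae_E) (simp add: cae_simps, rule class_eqI2, (simp add: cae_simps)+, auto simp: cae_simps rep_mult_def)
  next
    fix x y assume "x \<in> carrier (Cae T)" "y \<in> carrier (Cae T)"
    then show "x \<otimes>\<^bsub>Cae T\<^esub> y = y \<otimes>\<^bsub>Cae T\<^esub> x"
      by (elim carrier_Cae_E) (simp add: cae_simps, rule class_eqI2, (simp add: cae_simps)+, auto simp: cae_simps rep_mult_def)
  qed
next
  fix x y z assume "x \<in> carrier (Cae T)" "y \<in> carrier (Cae T)" "z \<in> carrier (Cae T)"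
  then show "(x \<oplus>\<^bsub>Cae T\<^esub> y) \<otimes>\<^bsub>Cae T\<^esub> z = x \<otimes>\<^bsub>Cae T\<^esub> z \<oplus>\<^bsub>Cae T\<^esub> y \<otimes>\<^bsub>Cae T\<^esub> z"
    by (elim carrier_Cae_E) (simp add: cae_simps, rule class_eqI2, (simp add: cae_simps)+, auto simp: cae_simps rep_mult_def rep_add_def algebra_simps)
qed

lemma zero_class': "cae_valid T p \<Longrightarrow> \<zero>\<^bsub>Cae T\<^esub> = cae_class T (fst p, \<lambda>_. 0)"
  unfolding zero_Cae
  by (rule class_eqI2, rule valid_const, simp add: cae_valid_def) auto

lemma ole_zero: "cae_valid T p \<Longrightarrow> ole (Cae T) (\<zero>\<^bsub>Cae T\<^esub>) (cae_class T p) \<longleftrightarrow> (\<forall>x\<in>fst p. 0 \<le> snd p x)"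
  unfolding zero_Cae by (subst ole_class) (auto simp: valid_const dest: valid_sub)

lemma add_pow_Cae:
  assumes p: "cae_valid T p"
  shows "add_pow (Cae T) k (cae_class T p) = cae_class T (fst p, \<lambda>x. real k * snd p x)"
proof (induction k)
  case 0
  show ?case using zero_class'[OF p]
    by (simp add: add_pow_def nat_pow_def)
next
  case (Suc k)
  have "add_pow (Cae T) (Suc k) (cae_class T p) = add (Cae T) (add_pow (Cae T) k (cae_class T p)) (cae_class T p)"
    by (simp add: add_pow_def nat_pow_def)
  also have "\<dots> = cae_class T (fst p, \<lambda>x. real (Suc k) * snd p x)"
    unfolding Suc add_class[OF valid_scale[OF p] p]
    by (rule class_eqI2, rule valid_add[OF valid_scale[OF p] p], rule valid_scale[OF p])
       (auto simp: rep_add_def algebra_simps)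
  finally show ?case .
qed

lemma Cae_refl: "r \<in> carrier (Cae T) \<Longrightarrow> ole (Cae T) r r"
  by (elim carrier_Cae_E) (simp add: ole_class)

lemma Cae_antisym: "r \<in> carrier (Cae T) \<Longrightarrow> s \<in> carrier (Cae T) \<Longrightarrow> ole (Cae T) r s \<Longrightarrow> ole (Cae T) s r \<Longrightarrow> r = s"
  by (elim carrier_Cae_E) (simp add: ole_class, rule class_eqI2, assumption+, force)

lemma Cae_trans:
  assumes "r \<in> carrier (Cae T)" "s \<in> carrier (Cae T)" "t \<in> carrier (Cae T)" "ole (Cae T) r s" "ole (Cae T) s t"
  shows "ole (Cae T) r t"
proof -
  obtain p q u where pq: "cae_valid T p" "cae_valid T q" "cae_valid T u"
    "r = cae_class T p" "s = cae_class T q" "t = cae_class T u"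
    using assms(1-3) by (meson carrier_Cae_E)
  have "\<forall>x\<in>fst p \<inter> fst q. snd p x \<le> snd q x" "\<forall>x\<in>fst q \<inter> fst u. snd q x \<le> snd u x"
    using ole_class[OF pq(1,2)] ole_class[OF pq(2,3)] assms(4,5) pq(4-6) by auto
  then have "le_ae T p u" unfolding le_ae_def using pq
    by (intro exI[of _ "fst p \<inter> fst q \<inter> fst u"]) (auto simp: cae_valid_def dense_open_Int intro: order_trans)
  then show ?thesis using pq le_ae_iff ole_class by metis
qed

lemma Cae_addmono:
  "r \<in> carrier (Cae T) \<Longrightarrow> s \<in> carrier (Cae T) \<Longrightarrow> t \<in> carrier (Cae T) \<Longrightarrow> ole (Cae T) r s
   \<Longrightarrow> ole (Cae T) (add (Cae T) r t) (add (Cae T) s t)"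
  by (elim carrier_Cae_E) (simp add: add_class ole_class valid_add, auto simp: rep_add_def)

lemma Cae_multpos:
  "r \<in> carrier (Cae T) \<Longrightarrow> s \<in> carrier (Cae T) \<Longrightarrow> ole (Cae T) (\<zero>\<^bsub>Cae T\<^esub>) r \<Longrightarrow> ole (Cae T) (\<zero>\<^bsub>Cae T\<^esub>) s
   \<Longrightarrow> ole (Cae T) (\<zero>\<^bsub>Cae T\<^esub>) (mult (Cae T) r s)"
  by (elim carrier_Cae_E) (simp add: mult_class ole_zero valid_mult, auto simp: rep_mult_def)

lemma Cae_sq:
  "r \<in> carrier (Cae T) \<Longrightarrow> ole (Cae T) (\<zero>\<^bsub>Cae T\<^esub>) (mult (Cae T) r r)"
  by (elim carrier_Cae_E) (simp add: mult_class ole_zero valid_mult, auto simp: rep_mult_def)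

lemma Cae_cancel:
  assumes "p \<in> carrier (Cae T)" "r \<in> carrier (Cae T)" "ole (Cae T) (\<zero>\<^bsub>Cae T\<^esub>) p"
    "ole (Cae T) (\<zero>\<^bsub>Cae T\<^esub>) (mult (Cae T) r (add (Cae T) (\<one>\<^bsub>Cae T\<^esub>) p))"
  shows "ole (Cae T) (\<zero>\<^bsub>Cae T\<^esub>) r"
proof -
  obtain a b where ab: "cae_valid T a" "cae_valid T b" "p = cae_class T a" "r = cae_class T b"
    using assms(1,2) by (meson carrier_Cae_E)
  have a: "\<forall>x\<in>fst a. 0 \<le> snd a x" using assms(3) ole_zero[OF ab(1)] ab(3) by auto
  have "ole (Cae T) (\<zero>\<^bsub>Cae T\<^esub>) (cae_class T (rep_mult b (rep_add (topspace T, \<lambda>_. 1) a)))"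
    using assms(4) ab by (simp add: one_Cae add_class mult_class valid_const valid_add)
  then have "\<forall>x\<in>fst b \<inter> fst a. 0 \<le> snd b x * (1 + snd a x)"
    using ab valid_sub[OF ab(1)]
    unfolding ole_zero[OF valid_mult[OF ab(2) valid_add[OF valid_const ab(1)]]] by (auto simp: rep_mult_def rep_add_def)
  then have "\<forall>x\<in>fst b \<inter> fst a. 0 \<le> snd b x * (1 + snd a x)" .
  have "\<forall>x\<in>fst b \<inter> fst a. 0 \<le> snd b x"
  proof
    fix x assume x: "x \<in> fst b \<inter> fst a"
    with a have "0 \<le> snd a x" by blast
    moreover have "0 \<le> snd b x * (1 + snd a x)" using x \<open>\<forall>x\<in>fst b \<inter> fst a. 0 \<le> snd b x * (1 + snd a x)\<close> by blast
    ultimately show "0 \<le> snd b x" by (smt (verit) zero_le_mult_iff)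
  qed
  then have "le_ae T (topspace T, \<lambda>_. 0) b" unfolding le_ae_def using ab valid_sub[OF ab(2)]
    by (intro exI[of _ "fst b \<inter> fst a"]) (auto simp: cae_valid_def dense_open_Int)
  then show ?thesis unfolding zero_Cae ab using ab le_ae_iff ole_class valid_const by metis
qed

lemma Cae_arch:
  assumes "g \<in> carrier (Cae T)" "h \<in> carrier (Cae T)"
    "\<forall>k::nat. k \<ge> 1 \<longrightarrow> ole (Cae T) (\<zero>\<^bsub>Cae T\<^esub>) (add (Cae T) (add_pow (Cae T) k g) h)"
  shows "ole (Cae T) (\<zero>\<^bsub>Cae T\<^esub>) g"
proof -
  obtain a b where ab: "cae_valid T a" "cae_valid T b" "g = cae_class T a" "h = cae_class T b"
    using assms(1,2) by (meson carrier_Cae_E)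
  have k: "\<forall>x\<in>fst a \<inter> fst b. 0 \<le> real k * snd a x + snd b x" if "k \<ge> 1" for k
  proof -
    have "ole (Cae T) (\<zero>\<^bsub>Cae T\<^esub>) (cae_class T (rep_add (fst a, \<lambda>x. real k * snd a x) b))"
      using assms(3) that ab by (simp add: add_pow_Cae add_class valid_scale)
    then show ?thesis
      unfolding ole_zero[OF valid_add[OF valid_scale[OF ab(1)] ab(2)]] by (auto simp: rep_add_def)
  qed
  have "\<forall>x\<in>fst a \<inter> fst b. 0 \<le> snd a x"
  proof (intro ballI, rule ccontr)
    fix x assume x: "x \<in> fst a \<inter> fst b" and n: "\<not> 0 \<le> snd a x"
    obtain k :: nat where kk: "\<bar>snd b x\<bar> / (- snd a x) < real k" using reals_Archimedean2 by blast
    have na: "0 < - snd a x" using n by linarith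
    have "0 \<le> \<bar>snd b x\<bar> / (- snd a x)" using na by (intro divide_nonneg_pos) auto
    then have "0 < real k" using kk by linarith
    then have k1: "k \<ge> 1" by linarith
    have "\<bar>snd b x\<bar> < real k * (- snd a x)" using kk pos_divide_less_eq[OF na] by blast
    then have "real k * snd a x + snd b x < 0" by linarith
    then show False using k[OF k1] x by force
  qed
  then have "le_ae T (topspace T, \<lambda>_. 0) a" unfolding le_ae_def using ab valid_sub[OF ab(1)]
    by (intro exI[of _ "fst a \<inter> fst b"]) (auto simp: cae_valid_def dense_open_Int)
  then show ?thesis unfolding zero_Cae ab using ab le_ae_iff ole_class valid_const by metis
qed

lemma sub_add_pow: "add_pow (R\<lparr>carrier := S\<rparr>) (k::nat) g = add_pow R k g"
  by (simp add: add_pow_def nat_pow_def)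

lemma Cae_subring:
  assumes S: "subring S (Cae T)"
  shows "po_cring ((Cae T)\<lparr>carrier := S\<rparr>) \<and> archimedean_po ((Cae T)\<lparr>carrier := S\<rparr>)
     \<and> strongly_localizable ((Cae T)\<lparr>carrier := S\<rparr>)"
proof -
  define R where "R = (Cae T)\<lparr>carrier := S\<rparr>"
  have sub: "S \<subseteq> carrier (Cae T)" using subringE(1)[OF S] .
  have cr: "cring R" unfolding R_def
    using cring.subcringI'[OF cring_Cae S] ring.subcring_iff[OF cring.axioms(1)[OF cring_Cae] sub] by blast
  have [simp]: "carrier R = S" "ole R = ole (Cae T)" "\<zero>\<^bsub>R\<^esub> = \<zero>\<^bsub>Cae T\<^esub>" "\<one>\<^bsub>R\<^esub> = \<one>\<^bsub>Cae T\<^esub>"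
    "add R = add (Cae T)" "mult R = mult (Cae T)" "\<And>k g. add_pow R (k::nat) g = add_pow (Cae T) k g"
    unfolding R_def by (simp_all add: sub_add_pow)
  have pc: "pos_cone R = {r \<in> S. ole (Cae T) (\<zero>\<^bsub>Cae T\<^esub>) r}" by (simp add: pos_cone_def)
  have inS: "x \<in> S \<Longrightarrow> x \<in> carrier (Cae T)" for x using sub by blast
  have mS: "x \<in> S \<Longrightarrow> y \<in> S \<Longrightarrow> mult (Cae T) x y \<in> S" for x y using subringE(6)[OF S] by blast
  have aS: "x \<in> S \<Longrightarrow> y \<in> S \<Longrightarrow> add (Cae T) x y \<in> S" for x y using subringE(7)[OF S] by blast
  have sq: "\<forall>r\<in>carrier R. mult R r r \<in> pos_cone R"
    using Cae_sq[of _ T] inS mS by (auto simp: pc)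
  have po: "po_cring R"
    unfolding po_cring_def
  proof (intro conjI ballI impI)
    show "cring R" by (rule cr)
    show "\<And>r. r \<in> carrier R \<Longrightarrow> mult R r r \<in> pos_cone R" using sq by blast
    show "\<And>r. r \<in> carrier R \<Longrightarrow> ole R r r" using Cae_refl[of _ T] inS by simp
    show "\<And>r s. r \<in> carrier R \<Longrightarrow> s \<in> carrier R \<Longrightarrow> ole R r s \<and> ole R s r \<Longrightarrow> r = s"
      using Cae_antisym[of _ T] inS by simp
    show "\<And>r s t. r \<in> carrier R \<Longrightarrow> s \<in> carrier R \<Longrightarrow> t \<in> carrier R \<Longrightarrow> ole R r s \<and> ole R s t \<Longrightarrow> ole R r t"
      using Cae_trans[of _ T] inS by (simp, blast)
    show "\<And>r s t. r \<in> carrier R \<Longrightarrow> s \<in> carrier R \<Longrightarrow> t \<in> carrier R \<Longrightarrow> ole R r s \<Longrightarrow> ole R (add R r t) (add R s t)"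
      using Cae_addmono[of _ T] inS by simp
    show "\<And>r s. r \<in> pos_cone R \<Longrightarrow> s \<in> pos_cone R \<Longrightarrow> mult R r s \<in> pos_cone R"
      using Cae_multpos[of _ T] inS mS unfolding pc by simp
  qed
  have ar: "archimedean_po R"
    unfolding archimedean_po_def pc
    using Cae_arch[of _ T] inS by (auto simp: pc)
  have "Loc R = (\<lambda>p. add R (\<one>\<^bsub>R\<^esub>) p) ` pos_cone R"
  proof
    show "Loc R \<subseteq> (\<lambda>p. add R (\<one>\<^bsub>R\<^esub>) p) ` pos_cone R" unfolding Loc_def by auto
  next
    show "(\<lambda>p. add R (\<one>\<^bsub>R\<^esub>) p) ` pos_cone R \<subseteq> Loc R"
    proof
      fix s assume "s \<in> (\<lambda>p. add R (\<one>\<^bsub>R\<^esub>) p) ` pos_cone R"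
      then obtain p where p: "p \<in> pos_cone R" "s = add R (\<one>\<^bsub>R\<^esub>) p" by blast
      have "r \<in> pos_cone R" if "r \<in> carrier R" "mult R r s \<in> pos_cone R" for r
        using that p Cae_cancel[of p T r] inS by (auto simp: pc)
      then show "s \<in> Loc R" unfolding Loc_def using p by blast
    qed
  qed
  then show ?thesis using po ar sq unfolding strongly_localizable_def R_def by blast
qed

theorem proposition15:
  fixes T :: "'a topology"
  assumes "compact_space T" and "Hausdorff_space T"
  shows "po_cring (Cae T) \<and> archimedean_po (Cae T) \<and> strongly_localizable (Cae T)
    \<and> (\<forall>S. subring S (Cae T) \<longrightarrow>
          (let R = (Cae T)\<lparr>carrier := S\<rparr> in
             po_cring R \<and> archimedean_po R \<and> strongly_localizable R))"
proof -
  have "subring (carrier (Cae T)) (Cae T)"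
    using ring.carrier_is_subring[OF cring.axioms(1)[OF cring_Cae]] .
  from Cae_subring[OF this] have "po_cring (Cae T) \<and> archimedean_po (Cae T) \<and> strongly_localizable (Cae T)"
    by simp
  then show ?thesis using Cae_subring[of _ T] by (simp add: Let_def)
qed

end
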